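(* Let $A_{1}\in \mathbb{C}^{m\times n}$, $b_{1}\in \mathbb{C}^{m}$, $A_{2}\in \mathbb{C}^{k\times n}$ with $r(A_{2})=k\geq 1$, and $b_{2}\in \mathbb{C}^{k}$. Define the subspaces \[ \mathcal{X}=P_{N(A_{2})}R(A_{1}^{*})=N(A_{2})\cap (N(A_{2})\cap N(A_{1}))^{\perp},\qquad \mathcal{Y}=N(A_{1})\oplus (A_{1}^{*}A_{1})^{\dagger}\big(N(A_{1})+N(A_{2})\big)^{\perp}. \] Then $\mathcal{X}$ and $\mathcal{Y}$ are complementary subspaces of $\mathbb{C}^n$ with \[ P_{\mathcal{X},\mathcal{Y}}=I-P_{\mathcal{Y},\mathcal{X}}=\big(A_1 (I-A_{2}^{\dagger}A_{2})\big)^{\dagger}A_1, \] and the following hold: 1. Every solution of the problem $\min_{x\in \mathbb{C}^{n}}\|A_{1}x-b_{1}\|^{2}$ subject to $A_{2}x=b_{2}$ lies in the set \[ \Xi =\{A_{1}^{\dagger}b_{1}+P_{\mathcal{Y},\mathcal{X}}(A_{2}^{\dagger}b_{2}-A_{1}^{\dagger}b_{1})+z:\ z\in N(A_{1})\cap N(A_{2})\}. \] 2. The element of $\Xi$ with the smallest Euclidean norm is $\xi:=A_{1}^{\dagger}b_{1}+P_{\mathcal{Y},\mathcal{X}}(A_{2}^{\dagger}b_{2}-A_{1}^{\dagger}b_{1})$. 3. For any $y\in\mathbb{C}^n$, the solution of $\min_{x\in\Xi}\|x-y\|$ is $\psi(y):=\xi+P_{N(A_1)\cap N(A_2)}\,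y$.
   Context: $A^{*}$ is the conjugate transpose, $A^{\dagger}$ the Moore–Penrose inverse, $r(A)$, $R(A)$, $N(A)$ the rank, range and null space of $A$; $\|\cdot\|$ is the Euclidean norm. For a subspace $S$, $S^{\perp}$ is its orthogonal complement, $P_S$ the orthogonal projector onto $S$, and for a matrix $B$, $BS=\{Bs:s\in S\}$. For complementary subspaces $L,M$ of $\mathbb{C}^n$, $P_{L,M}$ is the oblique projector onto $L$ along $M$ (the idempotent matrix with range $L$ and null space $M$). $\oplus$ denotes direct sum. *)

theory Defs
  imports "HOL-Analysis.Analysis"
begin

definition cadj :: "complex^'n^'m \<Rightarrow> complex^'m^'n" where
  "cadj A = (\<chi> i j. cnj (A $ j $ i))"

definition cinner :: "complex^'n \<Rightarrow> complex^'n \<Rightarrow> complex" where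
  "cinner x y = (\<Sum>i\<in>UNIV. x $ i * cnj (y $ i))"

definition nullsp :: "complex^'n^'m \<Rightarrow> (complex^'n) set" where
  "nullsp A = {x. A *v x = 0}"

definition rangesp :: "complex^'n^'m \<Rightarrow> (complex^'m) set" where
  "rangesp A = range (\<lambda>x. A *v x)"

definition orthc :: "(complex^'n) set \<Rightarrow> (complex^'n) set" where
  "orthc S = {x. \<forall>y\<in>S. cinner x y = 0}"

definition mpinv :: "complex^'n^'m \<Rightarrow> complex^'m^'n" where
  "mpinv A = (THE X. A ** X ** A = A \<and> X ** A ** X = X \<and>
                     cadj (A ** X) = A ** X \<and> cadj (X ** A) = X ** A)"

definition oproj :: "(complex^'n) set \<Rightarrow> complex^'n^'n" where
  "oproj S = (THE P. P ** P = P \<and> cadj P = P \<and> rangesp P = S)"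

definition obproj :: "(complex^'n) set \<Rightarrow> (complex^'n) set \<Rightarrow> complex^'n^'n" where
  "obproj L M = (THE P. P ** P = P \<and> rangesp P = L \<and> nullsp P = M)"

definition csubspace :: "(complex^'n) set \<Rightarrow> bool" where
  "csubspace S \<longleftrightarrow> 0 \<in> S \<and> (\<forall>x\<in>S. \<forall>y\<in>S. x + y \<in> S) \<and> (\<forall>c. \<forall>x\<in>S. c *s x \<in> S)"

definition complementary :: "(complex^'n) set \<Rightarrow> (complex^'n) set \<Rightarrow> bool" where
  "complementary L M \<longleftrightarrow> csubspace L \<and> csubspace M \<and> L \<inter> M = {0} \<and>
     (\<forall>x. \<exists>u\<in>L. \<exists>v\<in>M. x = u + v)"

definition setsum :: "(complex^'n) set \<Rightarrow> (complex^'n) set \<Rightarrow> (complex^'n) set" where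
  "setsum S T = {u + v | u v. u \<in> S \<and> v \<in> T}"

definition Xsp :: "complex^'n^'m \<Rightarrow> complex^'n^'k \<Rightarrow> (complex^'n) set" where
  "Xsp A1 A2 = (\<lambda>x. oproj (nullsp A2) *v x) ` rangesp (cadj A1)"

definition Ysp :: "complex^'n^'m \<Rightarrow> complex^'n^'k \<Rightarrow> (complex^'n) set" where
  "Ysp A1 A2 = setsum (nullsp A1)
     ((\<lambda>x. mpinv (cadj A1 ** A1) *v x) ` orthc (setsum (nullsp A1) (nullsp A2)))"

definition lse_solutions ::
  "complex^'n^'m \<Rightarrow> complex^'m \<Rightarrow> complex^'n^'k \<Rightarrow> complex^'k \<Rightarrow> (complex^'n) set" where
  "lse_solutions A1 b1 A2 b2 = {x. A2 *v x = b2 \<and>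
      (\<forall>x'. A2 *v x' = b2 \<longrightarrow> (norm (A1 *v x - b1))\<^sup>2 \<le> (norm (A1 *v x' - b1))\<^sup>2)}"

definition xi_vec ::
  "complex^'n^'m \<Rightarrow> complex^'m \<Rightarrow> complex^'n^'k \<Rightarrow> complex^'k \<Rightarrow> complex^'n" where
  "xi_vec A1 b1 A2 b2 = mpinv A1 *v b1 +
      obproj (Ysp A1 A2) (Xsp A1 A2) *v (mpinv A2 *v b2 - mpinv A1 *v b1)"

definition Xi_set ::
  "complex^'n^'m \<Rightarrow> complex^'m \<Rightarrow> complex^'n^'k \<Rightarrow> complex^'k \<Rightarrow> (complex^'n) set" where
  "Xi_set A1 b1 A2 b2 = {xi_vec A1 b1 A2 b2 + z | z. z \<in> nullsp A1 \<inter> nullsp A2}"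

end

theory Submission
  imports Defs
begin


lemma cinner_add_left: "cinner (x + y) z = cinner x z + cinner y z"
  by (simp add: cinner_def distrib_right sum.distrib)
lemma cinner_add_right: "cinner x (y + z) = cinner x y + cinner x z"
  by (simp add: cinner_def distrib_left sum.distrib)
lemma cinner_diff_left: "cinner (x - y) z = cinner x z - cinner y z"
  by (simp add: cinner_def left_diff_distrib sum_subtractf)
lemma cinner_diff_right: "cinner x (y - z) = cinner x y - cinner x z"
  by (simp add: cinner_def right_diff_distrib sum_subtractf)
lemma cinner_zero_left[simp]: "cinner 0 y = 0" by (simp add: cinner_def)
lemma cinner_zero_right[simp]: "cinner x 0 = 0" by (simp add: cinner_def)
lemma cinner_smult_left: "cinner (c *s x) y = c * cinner x y"
  by (simp add: cinner_def sum_distrib_left mult.assoc)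
lemma cinner_smult_right: "cinner x (c *s y) = cnj c * cinner x y"
  by (simp add: cinner_def sum_distrib_left mult_ac)
lemma cinner_commute: "cinner y x = cnj (cinner x y)"
  by (simp add: cinner_def mult.commute)

lemma inner_complex_Re: "inner (a::complex) b = Re (a * cnj b)"
  by (simp add: inner_complex_def)

lemma Re_cinner: "Re (cinner x y) = inner x y"
  by (simp add: cinner_def inner_vec_def inner_complex_Re)

lemma Im_cinner_self: "Im (cinner x x) = 0"
  by (simp add: cinner_def)

lemma cinner_self_norm: "cinner x x = of_real ((norm x)^2)"
proof -
  have "Re (cinner x x) = (norm x)^2" by (simp add: Re_cinner power2_norm_eq_inner)
  then show ?thesis using Im_cinner_self[of x] by (simp add: complex_eq_iff)
qed

lemma cinner_self_eq_0: "cinner x x = 0 \<longleftrightarrow> x = 0"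
  by (simp add: cinner_self_norm)

lemma cinner_adj: "cinner (A *v x) y = cinner x (cadj A *v y)"
proof -
  have "cinner (A *v x) y = (\<Sum>i\<in>UNIV. \<Sum>j\<in>UNIV. A$i$j * x$j * cnj (y$i))"
    by (simp add: cinner_def matrix_vector_mult_def sum_distrib_right)
  also have "\<dots> = (\<Sum>j\<in>UNIV. \<Sum>i\<in>UNIV. A$i$j * x$j * cnj (y$i))" by (rule sum.swap)
  also have "\<dots> = cinner x (cadj A *v y)"
    by (simp add: cinner_def matrix_vector_mult_def cadj_def sum_distrib_left mult_ac)
  finally show ?thesis .
qed

lemma cadj_cadj[simp]: "cadj (cadj A) = A"
  by (simp add: cadj_def vec_eq_iff)

lemma cinner_adj2: "cinner x (A *v y) = cinner (cadj A *v x) y"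
  using cinner_adj[of "cadj A" x y] by simp

lemma cadj_mult: "cadj (A ** B) = cadj B ** cadj A"
  by (simp add: cadj_def matrix_matrix_mult_def vec_eq_iff mult.commute)

lemma cadj_mat1[simp]: "cadj (mat 1 :: complex^'n^'n) = mat 1"
  by (simp add: cadj_def mat_def vec_eq_iff)

lemma cadj_diff: "cadj (A - B) = cadj A - cadj B"
  by (simp add: cadj_def vec_eq_iff)

lemma mv_smult: "A *v (c *s x) = c *s (A *v (x::complex^'n))"
  by (simp add: matrix_vector_mult_def vec_eq_iff sum_distrib_left mult_ac)

lemma cinner_eq_zero_all: "(\<And>x. cinner x y = 0) \<Longrightarrow> y = 0"
  using cinner_self_eq_0[of y] cinner_commute by metis

lemma herm_if: 
  fixes M :: "complex^'n^'n"
  assumes "\<And>x y. cinner (M *v x) y = cinner x (M *v y)"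
  shows "cadj M = M"
proof -
  have "cadj M *v y = M *v y" for y
  proof -
    have "cinner x (cadj M *v y - M *v y) = 0" for x
      using assms[of x y] by (simp add: cinner_diff_right cinner_adj)
    then show ?thesis using cinner_eq_zero_all[of "cadj M *v y - M *v y"] 
      by (metis cinner_commute complex_cnj_zero eq_iff_diff_eq_0)
  qed
  then show ?thesis by (simp add: matrix_eq)
qed



lemma csubspace_real: "csubspace S \<Longrightarrow> subspace S"
  unfolding subspace_def csubspace_def
proof (intro conjI ballI allI; (elim conjE)?)
  fix c x assume "\<forall>c. \<forall>x\<in>S. c *s x \<in> S" "x \<in> S"
  moreover have "c *\<^sub>R x = complex_of_real c *s x"
    unfolding vec_eq_iff by (metis vector_scaleR_component scaleR_conv_of_real vector_smult_component)
  ultimately show "c *\<^sub>R x \<in> S" by simp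
qed auto

lemma orthc_csubspace: "csubspace (orthc S)"
  by (auto simp: csubspace_def orthc_def cinner_add_left cinner_smult_left)

lemma orthcD: "x \<in> orthc S \<Longrightarrow> y \<in> S \<Longrightarrow> cinner x y = 0"
  by (simp add: orthc_def)

lemma orthcD': "x \<in> orthc S \<Longrightarrow> y \<in> S \<Longrightarrow> cinner y x = 0"
  by (metis cinner_commute complex_cnj_zero orthcD)

lemma orthc_self: "x \<in> S \<Longrightarrow> x \<in> orthc S \<Longrightarrow> x = 0"
  using cinner_self_eq_0 orthcD by blast

lemma csubspace_diff: "csubspace S \<Longrightarrow> x \<in> S \<Longrightarrow> y \<in> S \<Longrightarrow> x - y \<in> S"
  unfolding csubspace_def
  by (metis diff_conv_add_uminus vector_smult_lneg vector_smult_lid)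

lemma csubspace_0: "csubspace S \<Longrightarrow> 0 \<in> S" by (simp add: csubspace_def)
lemma csubspace_add: "csubspace S \<Longrightarrow> x \<in> S \<Longrightarrow> y \<in> S \<Longrightarrow> x + y \<in> S" by (simp add: csubspace_def)
lemma csubspace_smult: "csubspace S \<Longrightarrow> x \<in> S \<Longrightarrow> c *s x \<in> S" by (simp add: csubspace_def)

lemma decomp:
  assumes "csubspace S"
  shows "\<exists>u\<in>S. x - u \<in> orthc S"
proof -
  have sp: "span S = S" using csubspace_real[OF assms] by (simp add: span_eq_iff)
  obtain y z where y: "y \<in> span S" and z: "\<And>w. w \<in> span S \<Longrightarrow> orthogonal z w" and xe: "x = y + z"
    using orthogonal_subspace_decomp_exists[of S x] by blast
  have "cinner z w = 0" if w: "w \<in> S" for w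
  proof -
    have "Re (cinner z w) = 0" using z[of w] w sp by (simp add: Re_cinner orthogonal_def)
    moreover have "\<i> *s w \<in> S" using w assms by (simp add: csubspace_smult)
    then have "Re (cinner z (\<i> *s w)) = 0" using z[of "\<i> *s w"] sp by (simp add: Re_cinner orthogonal_def)
    then have "Im (cinner z w) = 0" by (simp add: cinner_smult_right)
    ultimately show ?thesis by (simp add: complex_eq_iff)
  qed
  then have "z \<in> orthc S" by (simp add: orthc_def)
  then show ?thesis using y sp xe by (intro bexI[of _ y]) auto
qed

lemma proj_unique:
  assumes "csubspace S" "u \<in> S" "x - u \<in> orthc S" "u' \<in> S" "x - u' \<in> orthc S"
  shows "u = u'"
proof -
  have "u - u' \<in> S" using assms by (simp add: csubspace_diff)
  moreover have "u - u' = (x - u') - (x - u)" by simp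
  then have "u - u' \<in> orthc S" using assms orthc_csubspace csubspace_diff by metis
  ultimately show ?thesis using orthc_self by fastforce
qed

lemma f_zero: "(\<And>c x. f (c *s x) = c *s f x) \<Longrightarrow> f 0 = (0::complex^'m)"
  by (metis vector_smult_lzero)

lemma f_sum:
  assumes "\<And>x y. f (x + y) = f x + f y" "\<And>c x. f (c *s x) = c *s f x"
  shows "finite A \<Longrightarrow> f (sum g A) = (sum (\<lambda>i. f (g i)) A :: complex^'m)"
proof (induction A rule: finite_induct)
  case empty then show ?case using f_zero[OF assms(2)] by simp
next
  case (insert a A) then show ?case by (simp add: assms(1))
qed

lemma lin_matrix:
  fixes f :: "complex^'n \<Rightarrow> complex^'m"
  assumes "\<And>x y. f (x + y) = f x + f y" "\<And>c x. f (c *s x) = c *s f x"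
  shows "\<exists>M::complex^'n^'m. \<forall>x. M *v x = f x"
proof (intro exI allI)
  fix x
  have "(\<chi> i j. f (axis j 1) $ i) *v x = (\<Sum>j\<in>UNIV. x$j *s f (axis j 1))"
    by (simp add: matrix_vector_mult_def vec_eq_iff sum_component mult.commute)
  also have "\<dots> = f (\<Sum>j\<in>UNIV. x$j *s axis j 1)"
    using f_sum[OF assms, of UNIV "\<lambda>j. x$j *s axis j 1"] by (simp add: assms(2))
  also have "\<dots> = f x" by (simp add: basis_expansion)
  finally show "(\<chi> i j. f (axis j 1) $ i) *v x = f x" .
qed

lemma herm_proj_char:
  fixes Q :: "complex^'n^'n"
  assumes "Q ** Q = Q" "cadj Q = Q" "rangesp Q = S"
  shows "Q *v x \<in> S \<and> x - Q *v x \<in> orthc S"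
proof
  show "Q *v x \<in> S" using assms(3) by (auto simp: rangesp_def)
  have "cinner (x - Q *v x) w = 0" if win: "w \<in> S" for w
  proof -
    obtain v where w: "w = Q *v v" using win assms(3) unfolding rangesp_def by blast
    have "cinner (x - Q *v x) w = cinner (Q *v (x - Q *v x)) v"
      using cinner_adj[of Q "x - Q *v x" v] assms(2) w by simp
    also have "Q *v (x - Q *v x) = 0"
      by (simp add: matrix_vector_mult_diff_distrib matrix_vector_mul_assoc assms(1))
    finally show ?thesis by simp
  qed
  then show "x - Q *v x \<in> orthc S" by (simp add: orthc_def)
qed

lemma proj_exists:
  fixes S :: "(complex^'n) set"
  assumes S: "csubspace S"
  shows "\<exists>P::complex^'n^'n. P ** P = P \<and> cadj P = P \<and> rangesp P = S"
proof -
  define p where "p x = (THE u. u \<in> S \<and> x - u \<in> orthc S)" for x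
  have p: "p x \<in> S \<and> x - p x \<in> orthc S" for x
    unfolding p_def using decomp[OF S, of x] proj_unique[OF S]
    by - (rule theI', blast)
  have pu: "p x = u" if "u \<in> S" "x - u \<in> orthc S" for x u
    using proj_unique[OF S] p that by blast
  have "p (x + y) = p x + p y" for x y
  proof (rule pu)
    show "p x + p y \<in> S" using p S csubspace_add by blast
    have "x + y - (p x + p y) = (x - p x) + (y - p y)" by simp
    then show "x + y - (p x + p y) \<in> orthc S" using p csubspace_add[OF orthc_csubspace] by metis
  qed
  moreover have "p (c *s x) = c *s p x" for c x
  proof (rule pu)
    show "c *s p x \<in> S" using p S csubspace_smult by blast
    have "c *s x - c *s p x = c *s (x - p x)" by (simp add: vec_eq_iff algebra_simps)
    then show "c *s x - c *s p x \<in> orthc S" using p orthc_csubspace csubspace_smult by metis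
  qed
  ultimately obtain P :: "complex^'n^'n" where P: "\<And>x. P *v x = p x"
    using lin_matrix by blast
  have "P ** P = P"
    unfolding matrix_eq by (simp add: matrix_vector_mul_assoc[symmetric] P) (metis p pu diff_self csubspace_0 orthc_csubspace)
  moreover have "cadj P = P"
  proof (rule herm_if)
    fix x y
    have "cinner (P *v x) y = cinner (P *v x) (P *v y) + cinner (P *v x) (y - P *v y)"
      by (simp add: cinner_diff_right)
    also have "cinner (P *v x) (y - P *v y) = 0" using p P orthcD' by metis
    also have "cinner x (P *v y) = cinner (P *v x) (P *v y) + cinner (x - P *v x) (P *v y)"
      by (simp add: cinner_diff_left)
    moreover have "cinner (x - P *v x) (P *v y) = 0" using p P orthcD by metis
    ultimately show "cinner (P *v x) y = cinner x (P *v y)" by simp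
  qed
  moreover have "rangesp P = S"
    unfolding rangesp_def P using p pu
    by (auto simp: image_def) (metis S csubspace_0 diff_self orthc_csubspace)
  ultimately show ?thesis by blast
qed

lemma oproj_props:
  assumes S: "csubspace S"
  shows "oproj S ** oproj S = oproj S \<and> cadj (oproj S) = oproj S \<and> rangesp (oproj S) = S"
proof -
  obtain P where P: "P ** P = P \<and> cadj P = P \<and> rangesp P = S" using proj_exists[OF S] by blast
  have u: "Q = P" if "Q ** Q = Q \<and> cadj Q = Q \<and> rangesp Q = S" for Q
    unfolding matrix_eq using herm_proj_char[of Q S] herm_proj_char[of P S] that P proj_unique[OF S] by metis
  show ?thesis unfolding oproj_def using P u by (rule theI)
qed

lemma oproj_char:
  assumes S: "csubspace S"
  shows "oproj S *v x \<in> S \<and> x - oproj S *v x \<in> orthc S"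
  using oproj_props[OF S] herm_proj_char by blast

lemma oproj_eq:
  assumes S: "csubspace S" "u \<in> S" "x - u \<in> orthc S"
  shows "oproj S *v x = u"
  using oproj_char[OF S(1)] proj_unique assms by blast



lemma rangesp_csubspace: "csubspace (rangesp M)"
  unfolding csubspace_def rangesp_def
proof (intro conjI ballI allI)
  show "0 \<in> range ((*v) M)" by (metis matrix_vector_mult_0_right rangeI)
  fix x y assume "x \<in> range ((*v) M)" "y \<in> range ((*v) M)"
  then obtain a b where "x = M *v a" "y = M *v b" by blast
  then have "x + y = M *v (a + b)" by (simp add: matrix_vector_right_distrib)
  then show "x + y \<in> range ((*v) M)" by blast
next
  fix c x assume "x \<in> range ((*v) M)"
  then obtain a where "x = M *v a" by blast
  then have "c *s x = M *v (c *s a)" by (simp add: mv_smult)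
  then show "c *s x \<in> range ((*v) M)" by blast
qed

lemma nullsp_csubspace: "csubspace (nullsp M)"
  unfolding csubspace_def nullsp_def by (auto simp: matrix_vector_right_distrib mv_smult)

lemma rangespI: "M *v x \<in> rangesp M" by (simp add: rangesp_def)

lemma AstarA_zero: "cadj A *v (A *v d) = 0 \<Longrightarrow> A *v d = 0"
  by (metis cinner_adj cinner_self_eq_0 cinner_zero_right cadj_cadj)

lemma range_null: 
  assumes "x \<in> rangesp (cadj A)" "A *v x = 0" shows "x = 0"
proof -
  obtain w where x: "x = cadj A *v w" using assms(1) unfolding rangesp_def by blast
  have "cinner x x = cinner w (A *v x)" using cinner_adj[of "cadj A" w x] x by simp
  then have "cinner x x = 0" using assms(2) by simp
  then show ?thesis by (metis cinner_self_eq_0)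
qed

lemma range_null_orth: 
  assumes "x \<in> rangesp (cadj A)" "A *v n = 0" shows "cinner x n = 0"
proof -
  obtain w where x: "x = cadj A *v w" using assms(1) unfolding rangesp_def by blast
  show ?thesis using cinner_adj[of "cadj A" w n] x assms(2) by simp
qed

lemma mp_uniq:
  assumes "x1 \<in> rangesp (cadj A)" "x2 \<in> rangesp (cadj A)"
    "cadj A *v (A *v x1) = cadj A *v (A *v x2)"
  shows "x1 = x2"
proof -
  have "cadj A *v (A *v (x1 - x2)) = 0" using assms(3) by (simp add: matrix_vector_mult_diff_distrib)
  then have "A *v (x1 - x2) = 0" by (rule AstarA_zero)
  moreover have "x1 - x2 \<in> rangesp (cadj A)" using assms csubspace_diff rangesp_csubspace by blast
  ultimately show ?thesis using range_null by fastforce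
qed

lemma mp_exist:
  "\<exists>x\<in>rangesp (cadj A). cadj A *v (A *v x) = cadj A *v y"
proof -
  obtain u where u: "u \<in> rangesp A" "y - u \<in> orthc (rangesp A)" using decomp[OF rangesp_csubspace] by blast
  obtain w where w: "u = A *v w" using u(1) unfolding rangesp_def by blast
  have "cinner z (cadj A *v (y - u)) = 0" for z
    using cinner_adj[of A z "y - u"] u(2) orthcD'[OF u(2) rangespI] by (metis cinner_commute complex_cnj_zero orthcD rangespI)
  then have yu: "cadj A *v (y - u) = 0" by (rule cinner_eq_zero_all)
  obtain x where x: "x \<in> rangesp (cadj A)" "w - x \<in> orthc (rangesp (cadj A))"
    using decomp[OF rangesp_csubspace] by blast
  have "cinner (A *v (w - x)) (A *v (w - x)) = cinner (w - x) (cadj A *v (A *v (w - x)))"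
    by (rule cinner_adj)
  also have "\<dots> = 0" by (rule orthcD[OF x(2) rangespI])
  finally have "A *v (w - x) = 0" by (simp add: cinner_self_eq_0)
  then have "A *v x = u" using w by (simp add: matrix_vector_mult_diff_distrib)
  then show ?thesis using x(1) yu by (intro bexI[of _ x]) (auto simp: matrix_vector_mult_diff_distrib)
qed

definition penrose :: "complex^'n^'m \<Rightarrow> complex^'m^'n \<Rightarrow> bool" where
  "penrose A X \<longleftrightarrow> A ** X ** A = A \<and> X ** A ** X = X \<and>
                     cadj (A ** X) = A ** X \<and> cadj (X ** A) = X ** A"

lemma penrose_char:
  assumes "penrose A X"
  shows "X *v y \<in> rangesp (cadj A) \<and> cadj A *v (A *v (X *v y)) = cadj A *v y"
proof
  have "X *v y = (X ** A ** X) *v y" using assms by (simp add: penrose_def)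
  also have "\<dots> = cadj (X ** A) *v (X *v y)" using assms
    by (simp add: penrose_def matrix_vector_mul_assoc)
  also have "\<dots> = cadj A *v (cadj X *v (X *v y))" by (simp add: cadj_mult matrix_vector_mul_assoc matrix_mul_assoc)
  finally show "X *v y \<in> rangesp (cadj A)" by (metis rangespI)
  have "cadj A ** (A ** X) = cadj A ** cadj (A ** X)" using assms by (simp add: penrose_def)
  also have "\<dots> = cadj (A ** X ** A)" by (simp add: cadj_mult)
  also have "\<dots> = cadj A" using assms by (simp add: penrose_def)
  finally show "cadj A *v (A *v (X *v y)) = cadj A *v y" by (metis matrix_vector_mul_assoc)
qed

lemma penrose_exists: "\<exists>G. penrose (A::complex^'n^'m) G"
proof -
  define g where "g y = (THE x. x \<in> rangesp (cadj A) \<and> cadj A *v (A *v x) = cadj A *v y)" for y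
  have g: "g y \<in> rangesp (cadj A) \<and> cadj A *v (A *v g y) = cadj A *v y" for y
  proof -
    obtain x where x: "x \<in> rangesp (cadj A)" "cadj A *v (A *v x) = cadj A *v y" using mp_exist by blast
    have "\<exists>!x. x \<in> rangesp (cadj A) \<and> cadj A *v (A *v x) = cadj A *v y"
    proof (rule ex1I[of _ x])
      show "x \<in> rangesp (cadj A) \<and> cadj A *v (A *v x) = cadj A *v y" using x by blast
      fix x' assume "x' \<in> rangesp (cadj A) \<and> cadj A *v (A *v x') = cadj A *v y"
      then show "x' = x" using mp_uniq[of x' A x] x by simp
    qed
    then show ?thesis unfolding g_def by (rule theI')
  qed
  have gu: "g y = x" if "x \<in> rangesp (cadj A)" "cadj A *v (A *v x) = cadj A *v y" for x y
    using mp_uniq[of "g y" A x] g[of y] that by simp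
  have gadd: "g (x + y) = g x + g y" for x y
  proof (rule gu)
    show "g x + g y \<in> rangesp (cadj A)"
      using g[of x] g[of y] csubspace_add[OF rangesp_csubspace] by blast
    show "cadj A *v (A *v (g x + g y)) = cadj A *v (x + y)"
      using g[of x] g[of y] by (simp add: matrix_vector_right_distrib)
  qed
  have gsm: "g (c *s x) = c *s g x" for c x
  proof (rule gu)
    show "c *s g x \<in> rangesp (cadj A)"
      using g[of x] csubspace_smult[OF rangesp_csubspace] by blast
    show "cadj A *v (A *v (c *s g x)) = cadj A *v (c *s x)"
      using g[of x] by (simp add: mv_smult)
  qed
  obtain G where G: "\<And>x. G *v x = g x"
    using lin_matrix[of g, OF gadd gsm] by blast
  have p1: "A ** G ** A = A"
  proof (subst matrix_eq, intro allI)
    fix x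
    have "cadj A *v (A *v (g (A *v x) - x)) = 0"
      using g[of "A *v x"] by (simp add: matrix_vector_mult_diff_distrib)
    then have "A *v (g (A *v x) - x) = 0" by (rule AstarA_zero)
    then show "(A ** G ** A) *v x = A *v x"
      by (simp add: matrix_vector_mul_assoc[symmetric] G matrix_vector_mult_diff_distrib)
  qed
  have p2: "G ** A ** G = G"
  proof (subst matrix_eq, intro allI)
    fix y
    have "g (A *v g y) = g y" using g[of y] by (intro gu) auto
    then show "(G ** A ** G) *v y = G *v y" by (simp add: matrix_vector_mul_assoc[symmetric] G)
  qed
  have p3: "cadj (A ** G) = A ** G"
  proof (rule herm_if)
    fix x y
    have a: "cinner (A *v g x) (y - A *v g y) = 0"
      using cinner_adj[of A "g x" "y - A *v g y"] g[of y] by (simp add: matrix_vector_mult_diff_distrib)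
    have b: "cinner (x - A *v g x) (A *v g y) = 0"
      using cinner_adj2[of "x - A *v g x" A "g y"] g[of x] by (simp add: matrix_vector_mult_diff_distrib)
    show "cinner ((A ** G) *v x) y = cinner x ((A ** G) *v y)"
      using a b by (simp add: matrix_vector_mul_assoc[symmetric] G cinner_diff_left cinner_diff_right)
  qed
  have AGA: "A *v (g (A *v x)) = A *v x" for x
    using p1 by (metis G matrix_vector_mul_assoc)
  have p4: "cadj (G ** A) = G ** A"
  proof (rule herm_if)
    fix x y
    have n1: "A *v (y - g (A *v y)) = 0" using AGA[of y] by (simp add: matrix_vector_mult_diff_distrib)
    have n2: "A *v (x - g (A *v x)) = 0" using AGA[of x] by (simp add: matrix_vector_mult_diff_distrib)
    have a: "cinner (g (A *v x)) (y - g (A *v y)) = 0"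
      using range_null_orth[of "g (A *v x)" A "y - g (A *v y)"] g[of "A *v x"] n1 by blast
    have b0: "cinner (g (A *v y)) (x - g (A *v x)) = 0"
      using range_null_orth[of "g (A *v y)" A "x - g (A *v x)"] g[of "A *v y"] n2 by blast
    have b: "cinner (x - g (A *v x)) (g (A *v y)) = 0"
      using b0 cinner_commute[of "x - g (A *v x)" "g (A *v y)"] by simp
    show "cinner ((G ** A) *v x) y = cinner x ((G ** A) *v y)"
      using a b by (simp add: matrix_vector_mul_assoc[symmetric] G cinner_diff_left cinner_diff_right)
  qed
  have "penrose A G" unfolding penrose_def using p1 p2 p3 p4 by (intro conjI)
  then show ?thesis by (rule exI)
qed

lemma mpinv_penrose: "penrose A (mpinv A)"
proof -
  obtain G where G: "penrose A G" using penrose_exists by blast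
  have u: "X = G" if "penrose A X" for X
    unfolding matrix_eq
  proof
    fix y
    show "X *v y = G *v y"
    proof (rule mp_uniq[of _ A])
      show "X *v y \<in> rangesp (cadj A)" using penrose_char[OF that, of y] by blast
      show "G *v y \<in> rangesp (cadj A)" using penrose_char[OF G, of y] by blast
      show "cadj A *v (A *v (X *v y)) = cadj A *v (A *v (G *v y))"
      proof -
        have a: "cadj A *v (A *v (X *v y)) = cadj A *v y" using penrose_char[OF that, of y] by blast
        have b: "cadj A *v (A *v (G *v y)) = cadj A *v y" using penrose_char[OF G, of y] by blast
        show ?thesis by (simp only: a b)
      qed
    qed
  qed
  have "penrose A (THE X. penrose A X)" by (rule theI[of "penrose A", OF G u])
  moreover have "mpinv A = (THE X. penrose A X)" unfolding mpinv_def penrose_def by simp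
  ultimately show ?thesis by simp
qed

lemma mp_char: "mpinv A *v y \<in> rangesp (cadj A) \<and> cadj A *v (A *v (mpinv A *v y)) = cadj A *v y"
  by (rule penrose_char[OF mpinv_penrose])

lemma mp_eq:
  assumes "x \<in> rangesp (cadj A)" "cadj A *v (A *v x) = cadj A *v y"
  shows "mpinv A *v y = x"
proof (rule mp_uniq[of _ A])
  show "mpinv A *v y \<in> rangesp (cadj A)" using mp_char[of A y] by blast
  show "cadj A *v (A *v (mpinv A *v y)) = cadj A *v (A *v x)"
  proof -
    have a: "cadj A *v (A *v (mpinv A *v y)) = cadj A *v y" using mp_char[of A y] by blast
    show ?thesis by (simp only: a assms(2))
  qed
qed (rule assms(1))



lemma nullsp_iff: "x \<in> nullsp M \<longleftrightarrow> M *v x = 0" by (simp add: nullsp_def)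

lemma range_orthc_null: "x \<in> rangesp (cadj A) \<Longrightarrow> x \<in> orthc (nullsp A)"
  unfolding orthc_def nullsp_def using range_null_orth by blast

lemma mpA_null: "A *v (x - mpinv A *v (A *v x)) = 0"
proof -
  have "cadj A *v (A *v (x - mpinv A *v (A *v x))) = 0"
    using mp_char[of A "A *v x"] by (simp add: matrix_vector_mult_diff_distrib)
  then show ?thesis by (rule AstarA_zero)
qed

lemma mp_fix: "v \<in> rangesp (cadj A) \<Longrightarrow> mpinv A *v (A *v v) = v"
  by (rule mp_eq) auto

lemma mp_zero: "mpinv A *v y = 0 \<longleftrightarrow> cadj A *v y = 0"
proof
  assume "mpinv A *v y = 0"
  then show "cadj A *v y = 0" using mp_char[of A y] by simp
next
  assume "cadj A *v y = 0"
  then show "mpinv A *v y = 0"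
    by (intro mp_eq) (auto intro: csubspace_0[OF rangesp_csubspace])
qed

lemma mp_AAmp: "cadj A *v (y - A *v (mpinv A *v y)) = 0"
  using mp_char[of A y] by (simp add: matrix_vector_mult_diff_distrib)

lemma pyth:
  assumes "cinner p q = 0"
  shows "(norm (p + q))^2 = (norm p)^2 + (norm q)^2"
proof -
  have "cinner q p = 0" using assms cinner_commute[of q p] by simp
  then have "cinner (p + q) (p + q) = cinner p p + cinner q q"
    using assms by (simp add: cinner_add_left cinner_add_right)
  then have "complex_of_real ((norm (p+q))^2) = complex_of_real ((norm p)^2) + complex_of_real ((norm q)^2)"
    unfolding cinner_self_norm .
  then have "complex_of_real ((norm (p+q))^2) = complex_of_real ((norm p)^2 + (norm q)^2)"
    by (simp only: of_real_add)
  then show ?thesis by (simp only: of_real_eq_iff)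
qed

lemma cinner_sym0: "cinner x y = 0 \<Longrightarrow> cinner y x = 0"
  by (metis cinner_commute complex_cnj_zero)

lemma oproj_fix: "csubspace S \<Longrightarrow> v \<in> S \<Longrightarrow> oproj S *v v = v"
  by (rule oproj_eq) (auto intro: csubspace_0[OF orthc_csubspace])

lemma oproj_zero: "csubspace S \<Longrightarrow> oproj S *v z = 0 \<longleftrightarrow> z \<in> orthc S"
proof
  assume S: "csubspace S" "oproj S *v z = 0"
  then show "z \<in> orthc S" using oproj_char[OF S(1), of z] by simp
next
  assume S: "csubspace S" "z \<in> orthc S"
  then show "oproj S *v z = 0" by (intro oproj_eq) (auto intro: csubspace_0)
qed

lemma obproj_eq:
  fixes P :: "complex^'n^'n"
  assumes "P ** P = P" "rangesp P = L" "nullsp P = M"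
  shows "obproj L M = P"
proof -
  have u: "Q = P" if "Q ** Q = Q \<and> rangesp Q = L \<and> nullsp Q = M" for Q
    unfolding matrix_eq
  proof
    fix x
    have QQ: "Q *v (Q *v w) = Q *v w" for w using that by (simp add: matrix_vector_mul_assoc)
    have "P *v x \<in> rangesp Q" using that assms(2) rangespI by metis
    then obtain w where w: "P *v x = Q *v w" unfolding rangesp_def by blast
    have "P *v (x - P *v x) = 0" using assms(1)
      by (simp add: matrix_vector_mult_diff_distrib matrix_vector_mul_assoc)
    then have "x - P *v x \<in> nullsp P" by (simp add: nullsp_def)
    moreover have "nullsp Q = nullsp P" using that assms(3) by blast
    ultimately have "x - P *v x \<in> nullsp Q" by (simp only:)
    then have "Q *v (x - P *v x) = 0" by (simp add: nullsp_def)
    then have "Q *v x = Q *v (P *v x)" by (simp add: matrix_vector_mult_diff_distrib)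
    also have "\<dots> = P *v x" using w QQ by simp
    finally show "Q *v x = P *v x" .
  qed
  have "obproj L M = (THE Q. Q ** Q = Q \<and> rangesp Q = L \<and> nullsp Q = M)" by (simp add: obproj_def)
  also have "\<dots> = P"
  proof (rule the_equality)
    show "P ** P = P \<and> rangesp P = L \<and> nullsp P = M" using assms by blast
  next
    fix Q assume "Q ** Q = Q \<and> rangesp Q = L \<and> nullsp Q = M"
    then show "Q = P" by (rule u)
  qed
  finally show ?thesis .
qed

lemma idem_compl:
  fixes P :: "complex^'n^'n"
  assumes "P ** P = P"
  shows "(mat 1 - P) ** (mat 1 - P) = mat 1 - P"
    "rangesp (mat 1 - P) = nullsp P" "nullsp (mat 1 - P) = rangesp P"
proof -
  have PP: "P *v (P *v w) = P *v w" for w using assms by (simp add: matrix_vector_mul_assoc)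
  have c: "(mat 1 - P) *v x = x - P *v x" for x by (simp add: matrix_vector_mult_diff_rdistrib)
  show "(mat 1 - P) ** (mat 1 - P) = mat 1 - P"
    unfolding matrix_eq by (simp add: matrix_vector_mul_assoc[symmetric] c matrix_vector_mult_diff_distrib PP)
  show "rangesp (mat 1 - P) = nullsp P"
  proof
    show "rangesp (mat 1 - P) \<subseteq> nullsp P"
      by (auto simp: rangesp_def nullsp_def c matrix_vector_mult_diff_distrib PP)
    show "nullsp P \<subseteq> rangesp (mat 1 - P)"
    proof
      fix v assume "v \<in> nullsp P"
      then have "v = (mat 1 - P) *v v" by (simp add: nullsp_def c)
      then show "v \<in> rangesp (mat 1 - P)" by (metis rangespI)
    qed
  qed
  show "nullsp (mat 1 - P) = rangesp P"
  proof
    show "nullsp (mat 1 - P) \<subseteq> rangesp P"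
    proof
      fix v assume "v \<in> nullsp (mat 1 - P)"
      then have "v = P *v v" by (simp add: nullsp_def c)
      then show "v \<in> rangesp P" by (metis rangespI)
    qed
    show "rangesp P \<subseteq> nullsp (mat 1 - P)"
      by (auto simp: rangesp_def nullsp_def c PP)
  qed
qed

lemma rangesp_mult: "rangesp (A ** B) = (\<lambda>x. A *v x) ` rangesp B"
  by (auto simp: rangesp_def matrix_vector_mul_assoc[symmetric] image_iff)



abbreviation "QQ A2 \<equiv> oproj (nullsp A2)"
abbreviation "BB A1 A2 \<equiv> A1 ** QQ A2"
abbreviation "PP A1 A2 \<equiv> mpinv (BB A1 A2) ** A1"
abbreviation "MM A1 \<equiv> cadj A1 ** A1"

lemma csubspace_inter: "csubspace S \<Longrightarrow> csubspace T \<Longrightarrow> csubspace (S \<inter> T)"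
  by (simp add: csubspace_def)

lemma Qprops:
  shows "QQ A ** QQ A = QQ A" "cadj (QQ A) = QQ A" "rangesp (QQ A) = nullsp A"
    "v \<in> nullsp A \<Longrightarrow> QQ A *v v = v" "QQ A *v x \<in> nullsp A"
  using oproj_props[OF nullsp_csubspace, of A] oproj_fix[OF nullsp_csubspace, of v A]
    oproj_char[OF nullsp_csubspace, of A x] by auto

lemma Qeq: "mat 1 - mpinv A2 ** A2 = QQ A2"
  unfolding matrix_eq
proof
  fix x
  have e: "(mat 1 - mpinv A2 ** A2) *v x = x - mpinv A2 *v (A2 *v x)"
    by (simp add: matrix_vector_mult_diff_rdistrib matrix_vector_mul_assoc)
  have "QQ A2 *v x = x - mpinv A2 *v (A2 *v x)"
  proof (rule oproj_eq[OF nullsp_csubspace])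
    show "x - mpinv A2 *v (A2 *v x) \<in> nullsp A2" using mpA_null[of A2 x] by (simp add: nullsp_def)
    have "x - (x - mpinv A2 *v (A2 *v x)) = mpinv A2 *v (A2 *v x)" by simp
    moreover have "mpinv A2 *v (A2 *v x) \<in> orthc (nullsp A2)"
      using mp_char[of A2 "A2 *v x"] range_orthc_null by blast
    ultimately show "x - (x - mpinv A2 *v (A2 *v x)) \<in> orthc (nullsp A2)" by simp
  qed
  then show "(mat 1 - mpinv A2 ** A2) *v x = QQ A2 *v x" using e by simp
qed

lemma cadjB: "cadj (BB A1 A2) = QQ A2 ** cadj A1"
  by (simp add: cadj_mult Qprops)

lemma RB_sub:
  assumes "v \<in> rangesp (cadj (BB A1 A2))"
  shows "v \<in> nullsp A2 \<and> v \<in> orthc (nullsp A2 \<inter> nullsp A1)"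
proof -
  obtain w where w: "v = QQ A2 *v (cadj A1 *v w)"
    using assms unfolding cadjB rangesp_def by (auto simp: matrix_vector_mul_assoc)
  have "cinner v n = 0" if n: "n \<in> nullsp A2 \<inter> nullsp A1" for n
  proof -
    have "cinner v n = cinner (cadj A1 *v w) (cadj (QQ A2) *v n)" using w cinner_adj by simp
    also have "cadj (QQ A2) *v n = n" using n Qprops(2)[of A2] Qprops(4)[of n A2] by simp
    also have "cinner (cadj A1 *v w) n = 0"
      using range_null_orth[of "cadj A1 *v w" A1 n] n rangespI[of "cadj A1" w] by (simp add: nullsp_def)
    finally show ?thesis .
  qed
  then show ?thesis using w Qprops(5) by (simp add: orthc_def)
qed

lemma Xeq: "Xsp A1 A2 = rangesp (cadj (BB A1 A2))"
  unfolding Xsp_def cadjB rangesp_mult ..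

lemma S1: "Xsp A1 A2 = nullsp A2 \<inter> orthc (nullsp A2 \<inter> nullsp A1)"
proof
  show "Xsp A1 A2 \<subseteq> nullsp A2 \<inter> orthc (nullsp A2 \<inter> nullsp A1)"
    unfolding Xeq using RB_sub by blast
  show "nullsp A2 \<inter> orthc (nullsp A2 \<inter> nullsp A1) \<subseteq> Xsp A1 A2"
  proof
    fix v assume v: "v \<in> nullsp A2 \<inter> orthc (nullsp A2 \<inter> nullsp A1)"
    obtain u where u: "u \<in> rangesp (cadj (BB A1 A2))" "v - u \<in> orthc (rangesp (cadj (BB A1 A2)))"
      using decomp[OF rangesp_csubspace] by blast
    have "cinner (BB A1 A2 *v (v - u)) w = 0" for w
    proof -
      have "cinner (v - u) (cadj (BB A1 A2) *v w) = 0" using orthcD[OF u(2) rangespI] .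
      then show ?thesis by (simp add: cinner_adj)
    qed
    then have "cinner w (BB A1 A2 *v (v - u)) = 0" for w by (rule cinner_sym0)
    then have Bvu: "BB A1 A2 *v (v - u) = 0" by (rule cinner_eq_zero_all)
    have uN: "u \<in> nullsp A2 \<and> u \<in> orthc (nullsp A2 \<inter> nullsp A1)" using RB_sub u(1) by blast
    have r2: "v - u \<in> nullsp A2" using v uN csubspace_diff[OF nullsp_csubspace] by blast
    then have "A1 *v (v - u) = 0" using Bvu Qprops(4)[OF r2] by (simp add: matrix_vector_mul_assoc[symmetric])
    then have r: "v - u \<in> nullsp A2 \<inter> nullsp A1" using r2 by (simp add: nullsp_def)
    have "cinner (v - u) (v - u) = cinner v (v - u) - cinner u (v - u)" by (simp add: cinner_diff_left)
    also have "\<dots> = 0" using orthcD[of v "nullsp A2 \<inter> nullsp A1" "v - u"]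
      orthcD[of u "nullsp A2 \<inter> nullsp A1" "v - u"] v uN r by simp
    finally have "v = u" by (simp add: cinner_self_eq_0)
    then show "v \<in> Xsp A1 A2" using u(1) Xeq[of A1 A2] by simp
  qed
qed

lemma Bp_N2: "mpinv (BB A1 A2) *v y \<in> nullsp A2"
  using mp_char[of "BB A1 A2" y] RB_sub by blast

lemma B_N2: assumes "v \<in> nullsp A2" shows "BB A1 A2 *v v = A1 *v v"
  using Qprops(4)[OF assms] by (simp add: matrix_vector_mul_assoc[symmetric])

lemma A1Bp: "A1 *v (mpinv (BB A1 A2) *v y) = BB A1 A2 *v (mpinv (BB A1 A2) *v y)"
proof -
  have "mpinv (BB A1 A2) *v y \<in> nullsp A2" by (rule Bp_N2)
  then show ?thesis by (simp add: B_N2)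
qed

lemma Pv: "PP A1 A2 *v x = mpinv (BB A1 A2) *v (A1 *v x)"
  by (simp add: matrix_vector_mul_assoc)

lemma PPidem: "PP A1 A2 ** PP A1 A2 = PP A1 A2"
  unfolding matrix_eq
proof
  fix x
  have "PP A1 A2 *v (PP A1 A2 *v x) = PP A1 A2 *v x"
    unfolding Pv A1Bp by (rule mp_fix) (use mp_char in blast)
  then show "(PP A1 A2 ** PP A1 A2) *v x = PP A1 A2 *v x" by (simp add: matrix_vector_mul_assoc)
qed

lemma rangeP: "rangesp (PP A1 A2) = Xsp A1 A2"
  unfolding Xeq
proof
  show "rangesp (PP A1 A2) \<subseteq> rangesp (cadj (BB A1 A2))"
  proof
    fix v assume "v \<in> rangesp (PP A1 A2)"
    then obtain x where "v = PP A1 A2 *v x" unfolding rangesp_def by blast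
    then show "v \<in> rangesp (cadj (BB A1 A2))" using mp_char[of "BB A1 A2" "A1 *v x"] by (simp add: Pv)
  qed
  show "rangesp (cadj (BB A1 A2)) \<subseteq> rangesp (PP A1 A2)"
  proof
    fix v assume v: "v \<in> rangesp (cadj (BB A1 A2))"
    have "v = mpinv (BB A1 A2) *v (BB A1 A2 *v v)" using mp_fix[OF v] by simp
    also have "\<dots> = PP A1 A2 *v (QQ A2 *v v)" by (simp add: Pv matrix_vector_mul_assoc[symmetric])
    finally show "v \<in> rangesp (PP A1 A2)" by (metis rangespI)
  qed
qed

lemma Mv: "MM A1 *v z = cadj A1 *v (A1 *v z)" by (simp add: matrix_vector_mul_assoc)
lemma cadjM: "cadj (MM A1) = MM A1" by (simp add: cadj_mult)

lemma MpR: "mpinv (MM A1) *v t \<in> rangesp (cadj A1)"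
proof -
  have "mpinv (MM A1) *v t \<in> rangesp (MM A1)" using mp_char[of "MM A1" t] cadjM by metis
  then show ?thesis unfolding rangesp_def Mv by blast
qed

lemma MMp: 
  assumes t: "t \<in> orthc (nullsp A1)"
  shows "MM A1 *v (mpinv (MM A1) *v t) = t"
proof -
  define d where "d = t - MM A1 *v (mpinv (MM A1) *v t)"
  have "MM A1 *v d = 0" using mp_AAmp[of "MM A1" t] cadjM unfolding d_def by metis
  then have "A1 *v d = 0" unfolding Mv by (rule AstarA_zero)
  then have dN: "d \<in> nullsp A1" by (simp add: nullsp_def)
  have "MM A1 *v (mpinv (MM A1) *v t) \<in> orthc (nullsp A1)"
    unfolding Mv by (rule range_orthc_null[OF rangespI])
  then have "d \<in> orthc (nullsp A1)" unfolding d_def using t csubspace_diff[OF orthc_csubspace] by blast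
  then have "d = 0" using dN orthc_self by blast
  then show ?thesis unfolding d_def by simp
qed

lemma setsum_orthc:
  assumes "z \<in> orthc S" "z \<in> orthc T" shows "z \<in> orthc (setsum S T)"
  using assms by (auto simp: orthc_def setsum_def cinner_add_right)

lemma orthc_anti: "S \<subseteq> T \<Longrightarrow> orthc T \<subseteq> orthc S"
  by (auto simp: orthc_def)

lemma setsum_sub1: "0 \<in> T \<Longrightarrow> S \<subseteq> setsum S T"
  by (auto simp: setsum_def) (metis add.right_neutral)

lemma setsum_sub2: "0 \<in> S \<Longrightarrow> T \<subseteq> setsum S T"
  by (auto simp: setsum_def) (metis add.left_neutral)

lemma nullP: "nullsp (PP A1 A2) = Ysp A1 A2"
proof -
  have key: "PP A1 A2 *v x = 0 \<longleftrightarrow> MM A1 *v x \<in> orthc (nullsp A2)" for x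
  proof -
    have "PP A1 A2 *v x = 0 \<longleftrightarrow> cadj (BB A1 A2) *v (A1 *v x) = 0" unfolding Pv by (rule mp_zero)
    also have "\<dots> \<longleftrightarrow> QQ A2 *v (MM A1 *v x) = 0" by (simp add: cadjB matrix_vector_mul_assoc matrix_mul_assoc)
    also have "\<dots> \<longleftrightarrow> MM A1 *v x \<in> orthc (nullsp A2)" by (rule oproj_zero[OF nullsp_csubspace])
    finally show ?thesis .
  qed
  have T1: "orthc (setsum (nullsp A1) (nullsp A2)) \<subseteq> orthc (nullsp A1)"
    by (rule orthc_anti[OF setsum_sub1[OF csubspace_0[OF nullsp_csubspace]]])
  have T2: "orthc (setsum (nullsp A1) (nullsp A2)) \<subseteq> orthc (nullsp A2)"
    by (rule orthc_anti[OF setsum_sub2[OF csubspace_0[OF nullsp_csubspace]]])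
  show ?thesis
  proof
    show "nullsp (PP A1 A2) \<subseteq> Ysp A1 A2"
    proof
      fix x assume "x \<in> nullsp (PP A1 A2)"
      then have z2: "MM A1 *v x \<in> orthc (nullsp A2)" using key by (simp add: nullsp_def)
      have z1: "MM A1 *v x \<in> orthc (nullsp A1)" unfolding Mv by (rule range_orthc_null[OF rangespI])
      have zT: "MM A1 *v x \<in> orthc (setsum (nullsp A1) (nullsp A2))" by (rule setsum_orthc[OF z1 z2])
      define u where "u = mpinv (MM A1) *v (MM A1 *v x)"
      have "MM A1 *v u = MM A1 *v x" unfolding u_def by (rule MMp[OF z1])
      then have "cadj A1 *v (A1 *v (x - u)) = 0" by (simp add: Mv matrix_vector_mult_diff_distrib)
      then have "A1 *v (x - u) = 0" by (rule AstarA_zero)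
      then have "x - u \<in> nullsp A1" by (simp add: nullsp_def)
      moreover have "u \<in> (\<lambda>x. mpinv (MM A1) *v x) ` orthc (setsum (nullsp A1) (nullsp A2))"
        unfolding u_def using zT by blast
      moreover have "x = (x - u) + u" by simp
      ultimately show "x \<in> Ysp A1 A2" unfolding Ysp_def setsum_def by blast
    qed
    show "Ysp A1 A2 \<subseteq> nullsp (PP A1 A2)"
    proof
      fix y assume "y \<in> Ysp A1 A2"
      then obtain n t where n: "n \<in> nullsp A1" and t: "t \<in> orthc (setsum (nullsp A1) (nullsp A2))"
        and y: "y = n + mpinv (MM A1) *v t"
        unfolding Ysp_def setsum_def by blast
      have "MM A1 *v y = MM A1 *v (mpinv (MM A1) *v t)"
        using n by (simp add: y matrix_vector_right_distrib Mv nullsp_def)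
      also have "\<dots> = t" using MMp t T1 by blast
      finally have "MM A1 *v y \<in> orthc (nullsp A2)" using t T2 by auto
      then show "y \<in> nullsp (PP A1 A2)" using key by (simp add: nullsp_def)
    qed
  qed
qed



lemma S2: "nullsp A1 \<inter> (\<lambda>x. mpinv (MM A1) *v x) ` orthc (setsum (nullsp A1) (nullsp A2)) = {0}"
proof
  show "nullsp A1 \<inter> (\<lambda>x. mpinv (MM A1) *v x) ` orthc (setsum (nullsp A1) (nullsp A2)) \<subseteq> {0}"
  proof
    fix v assume v: "v \<in> nullsp A1 \<inter> (\<lambda>x. mpinv (MM A1) *v x) ` orthc (setsum (nullsp A1) (nullsp A2))"
    then obtain t where t: "v = mpinv (MM A1) *v t" by blast
    have "v \<in> rangesp (cadj A1)" using t MpR by simp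
    moreover have "A1 *v v = 0" using v by (simp add: nullsp_def)
    ultimately show "v \<in> {0}" using range_null by blast
  qed
  have "(0::complex^'a) \<in> orthc (setsum (nullsp A1) (nullsp A2))" by (rule csubspace_0[OF orthc_csubspace])
  then have "mpinv (MM A1) *v 0 \<in> (\<lambda>x. mpinv (MM A1) *v x) ` orthc (setsum (nullsp A1) (nullsp A2))"
    by blast
  then show "{0} \<subseteq> nullsp A1 \<inter> (\<lambda>x. mpinv (MM A1) *v x) ` orthc (setsum (nullsp A1) (nullsp A2))"
    by (simp add: nullsp_def)
qed

lemma compl_idem:
  fixes P :: "complex^'n^'n"
  assumes PP: "P ** P = P"
  shows "complementary (rangesp P) (nullsp P)"
proof -
  have PPv: "P *v (P *v w) = P *v w" for w using PP by (simp add: matrix_vector_mul_assoc)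
  have fx: "v \<in> rangesp P \<Longrightarrow> P *v v = v" for v unfolding rangesp_def using PPv by blast
  have "rangesp P \<inter> nullsp P = {0}"
  proof
    show "rangesp P \<inter> nullsp P \<subseteq> {0}" using fx by (auto simp: nullsp_def)
    show "{0} \<subseteq> rangesp P \<inter> nullsp P"
      using csubspace_0[OF rangesp_csubspace] csubspace_0[OF nullsp_csubspace] by blast
  qed
  moreover have "\<exists>u\<in>rangesp P. \<exists>v\<in>nullsp P. x = u + v" for x
  proof (intro bexI)
    show "x = P *v x + (x - P *v x)" by simp
    show "P *v x \<in> rangesp P" by (rule rangespI)
    show "x - P *v x \<in> nullsp P" by (simp add: nullsp_def matrix_vector_mult_diff_distrib PPv)
  qed
  ultimately show ?thesis unfolding complementary_def
    using rangesp_csubspace nullsp_csubspace by blast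
qed

lemma obXY: "obproj (Xsp A1 A2) (Ysp A1 A2) = PP A1 A2"
  using obproj_eq[OF PPidem rangeP nullP] .

lemma obYX: "obproj (Ysp A1 A2) (Xsp A1 A2) = mat 1 - PP A1 A2"
proof -
  have "(mat 1 - PP A1 A2) ** (mat 1 - PP A1 A2) = mat 1 - PP A1 A2"
    "rangesp (mat 1 - PP A1 A2) = Ysp A1 A2" "nullsp (mat 1 - PP A1 A2) = Xsp A1 A2"
    using idem_compl[OF PPidem[of A1 A2]] nullP[of A1 A2] rangeP[of A1 A2] by simp_all
  then show ?thesis by (rule obproj_eq)
qed

lemma xi_formula:
  "xi_vec A1 b1 A2 b2 = mpinv A2 *v b2 + mpinv (BB A1 A2) *v (b1 - A1 *v (mpinv A2 *v b2))"
proof -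
  define x0 where "x0 = mpinv A2 *v b2"
  define a where "a = mpinv A1 *v b1"
  define Bp where "Bp = mpinv (BB A1 A2)"
  have z: "Bp *v (b1 - A1 *v a) = 0"
  proof -
    have "cadj (BB A1 A2) *v (b1 - A1 *v a) = QQ A2 *v (cadj A1 *v (b1 - A1 *v a))"
      by (simp add: cadjB matrix_vector_mul_assoc)
    also have "cadj A1 *v (b1 - A1 *v a) = 0" unfolding a_def by (rule mp_AAmp)
    finally show ?thesis unfolding Bp_def using mp_zero[of "BB A1 A2" "b1 - A1 *v a"] by simp
  qed
  have "xi_vec A1 b1 A2 b2 = a + (mat 1 - PP A1 A2) *v (x0 - a)"
    unfolding xi_vec_def obYX x0_def a_def ..
  also have "\<dots> = a + (x0 - a) - Bp *v (A1 *v (x0 - a))"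
    by (simp add: matrix_vector_mult_diff_rdistrib Pv Bp_def)
  also have "\<dots> = x0 - Bp *v (A1 *v x0) + Bp *v (A1 *v a)"
    by (simp add: matrix_vector_mult_diff_distrib)
  also have "Bp *v (A1 *v a) = Bp *v b1"
    using z by (simp add: matrix_vector_mult_diff_distrib)
  finally show ?thesis unfolding x0_def Bp_def by (simp add: matrix_vector_mult_diff_distrib)
qed

lemma xi_orth:
  assumes z: "z \<in> nullsp A1 \<inter> nullsp A2"
  shows "cinner (xi_vec A1 b1 A2 b2) z = 0"
proof -
  have "mpinv A2 *v b2 \<in> orthc (nullsp A2)" using mp_char[of A2 b2] range_orthc_null by blast
  then have a: "cinner (mpinv A2 *v b2) z = 0" using z orthcD by blast
  have "mpinv (BB A1 A2) *v (b1 - A1 *v (mpinv A2 *v b2)) \<in> orthc (nullsp A2 \<inter> nullsp A1)"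
    using RB_sub mp_char by blast
  then have b: "cinner (mpinv (BB A1 A2) *v (b1 - A1 *v (mpinv A2 *v b2))) z = 0"
    using z orthcD by blast
  show ?thesis unfolding xi_formula using a b by (simp add: cinner_add_left)
qed

lemma Xi_mem: "x \<in> Xi_set A1 b1 A2 b2 \<longleftrightarrow> x - xi_vec A1 b1 A2 b2 \<in> nullsp A1 \<inter> nullsp A2"
  unfolding Xi_set_def by (auto simp: algebra_simps) (rule exI[of _ "x - xi_vec A1 b1 A2 b2"], simp)

lemma S6: "lse_solutions A1 b1 A2 b2 \<subseteq> Xi_set A1 b1 A2 b2"
proof
  fix x assume x: "x \<in> lse_solutions A1 b1 A2 b2"
  then have feas: "A2 *v x = b2" and opt: "\<And>x'. A2 *v x' = b2 \<Longrightarrow>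
      (norm (A1 *v x - b1))\<^sup>2 \<le> (norm (A1 *v x' - b1))\<^sup>2"
    unfolding lse_solutions_def by blast+
  define x0 where "x0 = mpinv A2 *v b2"
  define B where "B = BB A1 A2"
  define c where "c = b1 - A1 *v x0"
  define w where "w = mpinv B *v c"
  have Ax0: "A2 *v x0 = b2" using mpA_null[of A2 x] feas
    by (simp add: x0_def matrix_vector_mult_diff_distrib)
  have wN: "w \<in> nullsp A2" unfolding w_def B_def by (rule Bp_N2)
  define d where "d = x - x0"
  have dN: "d \<in> nullsp A2" using feas Ax0 by (simp add: d_def nullsp_def matrix_vector_mult_diff_distrib)
  have Bd: "B *v d = A1 *v d" unfolding B_def by (rule B_N2[OF dN])
  have Bw: "B *v w = A1 *v w" unfolding B_def by (rule B_N2[OF wN])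
  have "A2 *v (x0 + w) = b2" using Ax0 wN by (simp add: nullsp_def matrix_vector_right_distrib)
  then have le: "(norm (A1 *v x - b1))\<^sup>2 \<le> (norm (A1 *v (x0 + w) - b1))\<^sup>2" by (rule opt)
  have "B *v (d - w) + (B *v w - c) = A1 *v d - c" using Bd by (simp add: matrix_vector_mult_diff_distrib)
  also have "\<dots> = A1 *v x - b1" by (simp add: d_def c_def matrix_vector_mult_diff_distrib)
  finally have e1: "A1 *v x - b1 = B *v (d - w) + (B *v w - c)" ..
  have e2: "A1 *v (x0 + w) - b1 = B *v w - c"
    by (simp add: Bw c_def matrix_vector_right_distrib algebra_simps)
  have orth: "cinner (B *v (d - w)) (B *v w - c) = 0"
  proof -
    have "cadj B *v (c - B *v w) = 0" unfolding w_def by (rule mp_AAmp)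
    then have "cadj B *v (B *v w - c) = 0" by (simp add: matrix_vector_mult_diff_distrib)
    then show ?thesis by (simp add: cinner_adj)
  qed
  have "(norm (B *v (d - w)))\<^sup>2 + (norm (B *v w - c))\<^sup>2 \<le> (norm (B *v w - c))\<^sup>2"
    using le unfolding e1 e2 pyth[OF orth] .
  then have "norm (B *v (d - w)) = 0" by simp
  then have Bdw: "B *v (d - w) = 0" by simp
  have dwN: "d - w \<in> nullsp A2" using dN wN csubspace_diff[OF nullsp_csubspace] by blast
  have "A1 *v (d - w) = 0" using Bdw unfolding B_def B_N2[OF dwN] .
  then have "d - w \<in> nullsp A1 \<inter> nullsp A2" using dwN by (simp add: nullsp_def)
  moreover have "x - xi_vec A1 b1 A2 b2 = d - w"
    unfolding xi_formula d_def w_def x0_def c_def B_def by simp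
  ultimately show "x \<in> Xi_set A1 b1 A2 b2" unfolding Xi_mem by simp
qed

lemma S8:
  assumes "x \<in> Xi_set A1 b1 A2 b2" "x \<noteq> xi_vec A1 b1 A2 b2"
  shows "norm (xi_vec A1 b1 A2 b2) < norm x"
proof -
  define z where "z = x - xi_vec A1 b1 A2 b2"
  have z: "z \<in> nullsp A1 \<inter> nullsp A2" using assms(1) unfolding Xi_mem z_def .
  have "z \<noteq> 0" using assms(2) z_def by simp
  then have zp: "(norm z)^2 > 0" by simp
  have x: "x = xi_vec A1 b1 A2 b2 + z" unfolding z_def by simp
  have "(norm x)^2 = (norm (xi_vec A1 b1 A2 b2))^2 + (norm z)^2"
    unfolding x by (rule pyth[OF xi_orth[OF z]])
  then have "(norm (xi_vec A1 b1 A2 b2))^2 < (norm x)^2" using zp by simp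
  then show ?thesis by (simp add: power_less_imp_less_base)
qed

lemma S9:
  fixes y :: "complex^'n" and A1 :: "complex^'n^'m" and A2 :: "complex^'n^'k"
  defines "R \<equiv> oproj (nullsp A1 \<inter> nullsp A2)"
  shows "xi_vec A1 b1 A2 b2 + R *v y \<in> Xi_set A1 b1 A2 b2 \<and>
     (\<forall>x\<in>Xi_set A1 b1 A2 b2. x \<noteq> xi_vec A1 b1 A2 b2 + R *v y \<longrightarrow>
         norm (xi_vec A1 b1 A2 b2 + R *v y - y) < norm (x - y))"
proof -
  have S: "csubspace (nullsp A1 \<inter> nullsp A2)" by (rule csubspace_inter[OF nullsp_csubspace nullsp_csubspace])
  have Ry: "R *v y \<in> nullsp A1 \<inter> nullsp A2" and yR: "y - R *v y \<in> orthc (nullsp A1 \<inter> nullsp A2)"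
    using oproj_char[OF S, of y] unfolding R_def by blast+
  define xi where "xi = xi_vec A1 b1 A2 b2"
  show ?thesis
  proof
    show "xi_vec A1 b1 A2 b2 + R *v y \<in> Xi_set A1 b1 A2 b2" unfolding Xi_mem using Ry by simp
    show "\<forall>x\<in>Xi_set A1 b1 A2 b2. x \<noteq> xi_vec A1 b1 A2 b2 + R *v y \<longrightarrow>
         norm (xi_vec A1 b1 A2 b2 + R *v y - y) < norm (x - y)"
    proof (intro ballI impI)
      fix x assume x: "x \<in> Xi_set A1 b1 A2 b2" "x \<noteq> xi_vec A1 b1 A2 b2 + R *v y"
      define z where "z = x - xi"
      have z: "z \<in> nullsp A1 \<inter> nullsp A2" using x(1) unfolding Xi_mem z_def xi_def .
      define p where "p = xi + R *v y - y"
      define q where "q = z - R *v y"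
      have qN: "q \<in> nullsp A1 \<inter> nullsp A2" unfolding q_def using z Ry csubspace_diff[OF S] by blast
      have "q \<noteq> 0"
      proof
        assume "q = 0"
        then have "x = xi + R *v y" unfolding q_def z_def by (metis diff_diff_eq diff_add_cancel add.commute eq_iff_diff_eq_0)
        then show False using x(2) unfolding xi_def by simp
      qed
      then have qp: "(norm q)^2 > 0" by simp
      have "cinner xi q = 0" unfolding xi_def by (rule xi_orth[OF qN])
      moreover have "cinner (y - R *v y) q = 0" using yR qN orthcD by blast
      ultimately have pq: "cinner p q = 0" unfolding p_def
        by (simp add: cinner_diff_left cinner_add_left algebra_simps)
      have "x - y = p + q" unfolding p_def q_def z_def by simp
      then have "(norm (x - y))^2 = (norm p)^2 + (norm q)^2" using pyth[OF pq] by simp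
      then have "(norm p)^2 < (norm (x - y))^2" using qp by simp
      then show "norm (xi_vec A1 b1 A2 b2 + R *v y - y) < norm (x - y)"
        unfolding p_def xi_def by (simp add: power_less_imp_less_base)
    qed
  qed
qed

theorem corollary4:
  fixes A1 :: "complex^'n^'m" and b1 :: "complex^'m"
    and A2 :: "complex^'n^'k" and b2 :: "complex^'k"
  assumes "rank A2 = CARD('k)"
  shows "Xsp A1 A2 = nullsp A2 \<inter> orthc (nullsp A2 \<inter> nullsp A1)
    \<and> nullsp A1 \<inter> (\<lambda>x. mpinv (cadj A1 ** A1) *v x) ` orthc (setsum (nullsp A1) (nullsp A2)) = {0}
    \<and> complementary (Xsp A1 A2) (Ysp A1 A2)
    \<and> obproj (Xsp A1 A2) (Ysp A1 A2) = mat 1 - obproj (Ysp A1 A2) (Xsp A1 A2)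
    \<and> obproj (Xsp A1 A2) (Ysp A1 A2) = mpinv (A1 ** (mat 1 - mpinv A2 ** A2)) ** A1
    \<and> lse_solutions A1 b1 A2 b2 \<subseteq> Xi_set A1 b1 A2 b2
    \<and> xi_vec A1 b1 A2 b2 \<in> Xi_set A1 b1 A2 b2
    \<and> (\<forall>x\<in>Xi_set A1 b1 A2 b2. x \<noteq> xi_vec A1 b1 A2 b2 \<longrightarrow> norm (xi_vec A1 b1 A2 b2) < norm x)
    \<and> (\<forall>y :: complex^'n.
         (let \<psi> = xi_vec A1 b1 A2 b2 + oproj (nullsp A1 \<inter> nullsp A2) *v y in
           \<psi> \<in> Xi_set A1 b1 A2 b2 \<and>
           (\<forall>x\<in>Xi_set A1 b1 A2 b2. x \<noteq> \<psi> \<longrightarrow> norm (\<psi> - y) < norm (x - y))))"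
proof (intro conjI)
  show "Xsp A1 A2 = nullsp A2 \<inter> orthc (nullsp A2 \<inter> nullsp A1)" by (rule S1)
  show "nullsp A1 \<inter> (\<lambda>x. mpinv (cadj A1 ** A1) *v x) ` orthc (setsum (nullsp A1) (nullsp A2)) = {0}"
    by (rule S2)
  show "complementary (Xsp A1 A2) (Ysp A1 A2)"
    using compl_idem[OF PPidem[of A1 A2]] rangeP[of A1 A2] nullP[of A1 A2] by simp
  show "obproj (Xsp A1 A2) (Ysp A1 A2) = mat 1 - obproj (Ysp A1 A2) (Xsp A1 A2)"
    unfolding obXY obYX by simp
  show "obproj (Xsp A1 A2) (Ysp A1 A2) = mpinv (A1 ** (mat 1 - mpinv A2 ** A2)) ** A1"
    unfolding obXY Qeq ..
  show "lse_solutions A1 b1 A2 b2 \<subseteq> Xi_set A1 b1 A2 b2" by (rule S6)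
  show "xi_vec A1 b1 A2 b2 \<in> Xi_set A1 b1 A2 b2"
    unfolding Xi_mem by (simp add: nullsp_def)
  show "\<forall>x\<in>Xi_set A1 b1 A2 b2. x \<noteq> xi_vec A1 b1 A2 b2 \<longrightarrow> norm (xi_vec A1 b1 A2 b2) < norm x"
    using S8 by blast
  show "\<forall>y :: complex^'n.
         (let \<psi> = xi_vec A1 b1 A2 b2 + oproj (nullsp A1 \<inter> nullsp A2) *v y in
           \<psi> \<in> Xi_set A1 b1 A2 b2 \<and>
           (\<forall>x\<in>Xi_set A1 b1 A2 b2. x \<noteq> \<psi> \<longrightarrow> norm (\<psi> - y) < norm (x - y)))"
    unfolding Let_def using S9 by blast
qed

end
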